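(* Let $(k_n)$ be a sequence of positive integers with $k_n\ll n$ (i.e. $k_n/n\to0$). Let $G_n$ be the Erdős–Rényi random graph on $\mathcal C^0_n$ with any edge probability $p_n\in(0,1)$ and $R_n$ its associated reaction network. Then there is a constant $c>0$ (independent of $n$) such that for all sufficiently large $n$, \[ \mathbb P(\delta_{R_n}=0\mid R_n\text{ is }k_n\text{-paired})\ge\Big(1-c\frac{k_n^4}{n^4}\Big)\Big(1-\frac{21k_n}{n}\Big). \]
   Context: A reaction network on species $S_1,\dots,S_n$ consists of a finite set $\mathcal R$ of reactions $y\to y'$ where $y\neq y'$ are complexes, i.e. vectors in $\mathbb Z^n_{\ge0}$; $\mathcal C$ is the set of complexes appearing in some reaction. Its graph has vertex set $\mathcal C$ and a directed edge $y\to y'$ for each reaction; $\ell$ denotes the number of connected components of this graph (ignoring edge directions), $s=\dim\operatorname{span}\{y'-y: y\to y'\in\mathcal R\}$, and the deficiency is $\delta=|\mathcal C|-\ell-s$. Let $e_i$ be the $i$-th standard basis vector of $\mathbb Z^n$ and $\mathcal C^0_n=\{0\}\cup\{e_i:1\le i\le n\}\cup\{e_i+e_j:1\le i\le j\le n\}$, so $N_n=|\mathcal C^0_n|=\frac{n^2+3n+2}{2}$. $G_n$ is the Erdős–Rényi random graph on vertex set $\mathcal C^0_n$ in which each of the $\binom{N_n}{2}$ possible undirected edges is present independently with probability $p_n$. The associated reaction network $R_n$ has species $S_1,\dots,S_n$, complex set equal to the set of vertices of $G_n$ of positive degree, and for each edge $\{y,y'\}$ of $G_n$ the two reactions $y\to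 y'$ and $y'\to y$; $\delta_{R_n}$ is its deficiency. A reaction network is paired if each connected component contains exactly two complexes, and $i$-paired if it is paired with exactly $i$ connected components. Conditioned on $R_n$ being $k_n$-paired, $G_n$ is uniformly distributed over all matchings with $k_n$ edges on $\mathcal C^0_n$. *)

theory Defs
  imports "HOL-Analysis.Analysis" "HOL-Library.Function_Algebras"
begin

text \<open>Complexes are vectors in Z_{>=0}^n, represented as functions nat => nat;
  species S_1..S_n correspond to indices 0..n-1.\<close>

definition unitv :: "nat \<Rightarrow> nat \<Rightarrow> nat" where
  "unitv i = (\<lambda>j. if j = i then 1 else 0)"

definition C0 :: "nat \<Rightarrow> (nat \<Rightarrow> nat) set" where
  "C0 n = {\<lambda>_. 0} \<union> {unitv i | i. i < n}
          \<union> {(\<lambda>j. unitv i j + unitv i' j) | i i'. i \<le> i' \<and> i' < n}"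

definition possible_edges :: "nat \<Rightarrow> (nat \<Rightarrow> nat) set set" where
  "possible_edges n = {e. e \<subseteq> C0 n \<and> card e = 2}"

text \<open>Network associated with an edge set E: complexes are the vertices of
  positive degree; reactions y -> y' and y' -> y for each edge {y,y'}.\<close>
definition complexes :: "(nat \<Rightarrow> nat) set set \<Rightarrow> (nat \<Rightarrow> nat) set" where
  "complexes E = \<Union>E"

definition link_rel :: "(nat \<Rightarrow> nat) set set \<Rightarrow> ((nat \<Rightarrow> nat) \<times> (nat \<Rightarrow> nat)) set" where
  "link_rel E = {(x, y). {x, y} \<in> E}"

definition linkage_classes :: "(nat \<Rightarrow> nat) set set \<Rightarrow> (nat \<Rightarrow> nat) set set" where
  "linkage_classes E = complexes E // ((link_rel E)\<^sup>*)"

definition reaction_vectors :: "(nat \<Rightarrow> nat) set set \<Rightarrow> (nat \<Rightarrow> real) set" where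
  "reaction_vectors E =
     {(\<lambda>i. real (y' i) - real (y i)) | y y'. (y, y') \<in> link_rel E}"

definition stoich_dim :: "(nat \<Rightarrow> nat) set set \<Rightarrow> nat" where
  "stoich_dim E = vector_space.dim (\<lambda>(c::real) (f::nat \<Rightarrow> real) i. c * f i) (reaction_vectors E)"

definition deficiency :: "(nat \<Rightarrow> nat) set set \<Rightarrow> int" where
  "deficiency E = int (card (complexes E)) - int (card (linkage_classes E)) - int (stoich_dim E)"

definition paired :: "(nat \<Rightarrow> nat) set set \<Rightarrow> bool" where
  "paired E \<longleftrightarrow> (\<forall>L \<in> linkage_classes E. card L = 2)"

definition i_paired :: "nat \<Rightarrow> (nat \<Rightarrow> nat) set set \<Rightarrow> bool" where
  "i_paired i E \<longleftrightarrow> paired E \<and> card (linkage_classes E) = i"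

definition er_prob :: "nat \<Rightarrow> real \<Rightarrow> (nat \<Rightarrow> nat) set set \<Rightarrow> real" where
  "er_prob n p E = p ^ card E * (1 - p) ^ (card (possible_edges n) - card E)"

definition er_event_prob :: "nat \<Rightarrow> real \<Rightarrow> ((nat \<Rightarrow> nat) set set \<Rightarrow> bool) \<Rightarrow> real" where
  "er_event_prob n p P = (\<Sum>E \<in> {E. E \<subseteq> possible_edges n \<and> P E}. er_prob n p E)"

definition cond_prob_def0_paired :: "nat \<Rightarrow> real \<Rightarrow> nat \<Rightarrow> real" where
  "cond_prob_def0_paired n p k =
     er_event_prob n p (\<lambda>E. deficiency E = 0 \<and> i_paired k E) / er_event_prob n p (i_paired k)"

end

theory Submission
  imports Defs
begin


interpretation FV: vector_space "\<lambda>(c::real) (f::nat \<Rightarrow> real) i. c * f i"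
  by unfold_locales (auto simp: fun_eq_iff algebra_simps)

lemma stoich_dim_FV: "stoich_dim E = FV.dim (reaction_vectors E)"
  unfolding stoich_dim_def by simp

lemma span_coord_zero:
  assumes "x \<in> FV.span S" "\<forall>v\<in>S. v i = 0"
  shows "x i = 0"
proof -
  have "FV.subspace {f. f i = 0}"
    unfolding FV.subspace_def by simp
  with assms show ?thesis
    using FV.span_induct[of x S "\<lambda>f. f i = 0"] by auto
qed

lemma peel_independent:
  fixes S :: "(nat \<Rightarrow> real) set"
  assumes "finite S"
    and "\<forall>T \<subseteq> S. T \<noteq> {} \<longrightarrow> (\<exists>i. card {v\<in>T. v i \<noteq> 0} = 1)"
  shows "FV.independent S"
  using assms
proof (induction "card S" arbitrary: S rule: less_induct)
  case less
  show ?case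
  proof (cases "S = {}")
    case True then show ?thesis using FV.independent_empty by simp
  next
    case False
    then obtain i where "card {v\<in>S. v i \<noteq> 0} = 1" using less.prems by blast
    then obtain x where x: "{v\<in>S. v i \<noteq> 0} = {x}" by (auto simp: card_Suc_eq)
    define S' where "S' = S - {x}"
    have xS: "x \<in> S" "x i \<noteq> 0" using x by auto
    have "card S > 0" using xS less.prems(1) by (auto simp: card_gt_0_iff)
    then have "card S' < card S" using xS less.prems(1) unfolding S'_def
      by simp
    moreover have "\<forall>T \<subseteq> S'. T \<noteq> {} \<longrightarrow> (\<exists>i. card {v\<in>T. v i \<noteq> 0} = 1)"
      using less.prems(2) unfolding S'_def by blast
    ultimately have ind: "FV.independent S'"
      using less.hyps[of S'] less.prems(1) unfolding S'_def by auto
    have "\<forall>v\<in>S'. v i = 0" using x unfolding S'_def by auto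
    then have "x \<notin> FV.span S'" using span_coord_zero xS(2) by blast
    then have "FV.independent (insert x S')" using ind FV.independent_insertI by blast
    moreover have "insert x S' = S" using xS unfolding S'_def by auto
    ultimately show ?thesis by simp
  qed
qed





definition matching :: "(nat \<Rightarrow> nat) set set \<Rightarrow> bool" where
  "matching E \<longleftrightarrow> (\<forall>e\<in>E. \<forall>f\<in>E. e \<noteq> f \<longrightarrow> e \<inter> f = {})"

lemma link_rel_sym: "(x, y) \<in> link_rel E \<longleftrightarrow> (y, x) \<in> link_rel E"
  unfolding link_rel_def by (auto simp: insert_commute)

lemma class_matching:
  assumes m: "matching E" and c2: "\<forall>e\<in>E. card e = 2" and e: "e \<in> E" and x: "x \<in> e"
  shows "(link_rel E)\<^sup>* `` {x} = e"
proof
  show "(link_rel E)\<^sup>* `` {x} \<subseteq> e"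
  proof
    fix z assume "z \<in> (link_rel E)\<^sup>* `` {x}"
    then have "(x, z) \<in> (link_rel E)\<^sup>*" by simp
    then show "z \<in> e"
    proof (induction rule: rtrancl_induct)
      case base then show ?case using x by simp
    next
      case (step y z)
      then have "{y, z} \<in> E" unfolding link_rel_def by simp
      moreover have "{y, z} \<inter> e \<noteq> {}" using step by auto
      ultimately have "{y, z} = e" using m e unfolding matching_def by metis
      then show ?case by blast
    qed
  qed
next
  show "e \<subseteq> (link_rel E)\<^sup>* `` {x}"
  proof
    fix z assume z: "z \<in> e"
    show "z \<in> (link_rel E)\<^sup>* `` {x}"
    proof (cases "z = x")
      case True then show ?thesis by simp
    next
      case False
      have "finite e" using c2 e by (metis card.infinite zero_neq_numeral)
      have "e = {x, z}"
      proof -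
        have "{x, z} \<subseteq> e" using x z by simp
        moreover have "card {x, z} = 2" using False by simp
        ultimately show ?thesis using c2 e \<open>finite e\<close> by (metis card_subset_eq)
      qed
      then have "(x, z) \<in> link_rel E" using e unfolding link_rel_def by simp
      then show ?thesis by auto
    qed
  qed
qed

lemma lc_matching:
  assumes m: "matching E" and c2: "\<forall>e\<in>E. card e = 2"
  shows "linkage_classes E = E"
proof -
  have "linkage_classes E = {(link_rel E)\<^sup>* `` {x} | x. x \<in> \<Union>E}"
    unfolding linkage_classes_def complexes_def quotient_def by auto
  also have "\<dots> = E"
  proof
    show "{(link_rel E)\<^sup>* `` {x} | x. x \<in> \<Union>E} \<subseteq> E"
      using class_matching[OF m c2] by auto
    show "E \<subseteq> {(link_rel E)\<^sup>* `` {x} | x. x \<in> \<Union>E}"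
    proof
      fix e assume e: "e \<in> E"
      then have "e \<noteq> {}" using c2 by fastforce
      then obtain x where "x \<in> e" by blast
      then show "e \<in> {(link_rel E)\<^sup>* `` {x} | x. x \<in> \<Union>E}"
        using class_matching[OF m c2 e] e by blast
    qed
  qed
  finally show ?thesis .
qed

lemma possible_edges_finite: "finite (C0 n)"
proof -
  have a: "{unitv i | i. i < n} = unitv ` {..<n}" by blast
  have b: "{(\<lambda>j. unitv i j + unitv i' j) | i i'. i \<le> i' \<and> i' < n}
      \<subseteq> (\<lambda>(i,i'). (\<lambda>j. unitv i j + unitv i' j)) ` ({..<n} \<times> {..<n})"
  proof
    fix y assume "y \<in> {(\<lambda>j. unitv i j + unitv i' j) | i i'. i \<le> i' \<and> i' < n}"
    then obtain i i' where "y = (\<lambda>j. unitv i j + unitv i' j)" "i \<le> i'" "i' < n" by blast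
    then show "y \<in> (\<lambda>(i,i'). (\<lambda>j. unitv i j + unitv i' j)) ` ({..<n} \<times> {..<n})"
      by (intro image_eqI[of _ _ "(i,i')"]) auto
  qed
  show ?thesis unfolding C0_def a
    using finite_subset[OF b] by simp
qed

lemma paired_matching:
  assumes E: "E \<subseteq> possible_edges n" and p: "paired E"
  shows "matching E"
  unfolding matching_def
proof (intro ballI impI)
  fix e f assume e: "e \<in> E" and f: "f \<in> E" and ne: "e \<noteq> f"
  show "e \<inter> f = {}"
  proof (rule ccontr)
    assume "e \<inter> f \<noteq> {}"
    then obtain x where x: "x \<in> e" "x \<in> f" by blast
    have "\<Union>E \<subseteq> C0 n" using E unfolding possible_edges_def by blast
    then have fin: "finite (\<Union>E)" by (rule finite_subset) (rule possible_edges_finite)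
    have c2: "card e = 2" "card f = 2" using E e f unfolding possible_edges_def by auto
    have sub: "e \<union> f \<subseteq> (link_rel E)\<^sup>* `` {x}"
    proof
      fix z assume "z \<in> e \<union> f"
      then obtain g where g: "g \<in> E" "x \<in> g" "z \<in> g" using x e f by blast
      show "z \<in> (link_rel E)\<^sup>* `` {x}"
      proof (cases "z = x")
        case True then show ?thesis by simp
      next
        case False
        have cg: "card g = 2" using E g unfolding possible_edges_def by auto
        then have "finite g" by (metis card.infinite zero_neq_numeral)
        have "g = {x, z}"
          using card_subset_eq[OF \<open>finite g\<close>, of "{x,z}"] False cg g by simp
        then have "(x, z) \<in> link_rel E" using g unfolding link_rel_def by simp
        then show ?thesis by auto
      qed
    qed
    have subU: "(link_rel E)\<^sup>* `` {x} \<subseteq> \<Union>E"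
    proof
      fix z assume "z \<in> (link_rel E)\<^sup>* `` {x}"
      then have "(x, z) \<in> (link_rel E)\<^sup>*" by simp
      then show "z \<in> \<Union>E"
      proof (induction rule: rtrancl_induct)
        case base then show ?case using x e by blast
      next
        case (step y z) then show ?case unfolding link_rel_def by auto
      qed
    qed
    have "(link_rel E)\<^sup>* `` {x} \<in> linkage_classes E"
      unfolding linkage_classes_def complexes_def by (rule quotientI) (use x e in blast)
    then have c: "card ((link_rel E)\<^sup>* `` {x}) = 2" using p unfolding paired_def by blast
    have fe: "finite e" "finite f" using c2 by (metis card.infinite zero_neq_numeral)+
    have "\<not> f \<subseteq> e" using card_subset_eq[OF fe(1), of f] c2 ne by auto
    then have "e \<subset> e \<union> f" by blast
    then have "card e < card (e \<union> f)" using fe by (simp add: psubset_card_mono)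
    also have "\<dots> \<le> card ((link_rel E)\<^sup>* `` {x})"
      using card_mono[OF finite_subset[OF subU fin] sub] .
    finally show False using c c2 by simp
  qed
qed

lemma i_paired_iff:
  assumes E: "E \<subseteq> possible_edges n"
  shows "i_paired k E \<longleftrightarrow> matching E \<and> card E = k"
proof -
  have c2: "\<forall>e\<in>E. card e = 2" using E unfolding possible_edges_def by auto
  show ?thesis
  proof
    assume "i_paired k E"
    then have "paired E" "card (linkage_classes E) = k" unfolding i_paired_def by auto
    moreover have "matching E" using paired_matching[OF E] \<open>paired E\<close> .
    ultimately show "matching E \<and> card E = k" using lc_matching[OF _ c2] by simp
  next
    assume "matching E \<and> card E = k"
    then show "i_paired k E" unfolding i_paired_def paired_def
      using lc_matching[OF _ c2] c2 by simp
  qed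
qed




lemma card2_finite: "card (e::'a set) = 2 \<Longrightarrow> finite e"
  by (metis card.infinite zero_neq_numeral)

lemma card_union_matching:
  assumes "matching E" "\<forall>e\<in>E. card e = 2"
  shows "card (\<Union>E) = 2 * card E"
proof -
  have pw: "pairwise disjnt E" using assms(1) unfolding matching_def pairwise_def disjnt_def by blast
  have "card (\<Union>E) = sum card E"
    by (rule card_Union_disjoint[OF pw]) (use assms(2) card2_finite in blast)
  also have "\<dots> = sum (\<lambda>_. 2) E" using assms(2) by (intro sum.cong) auto
  also have "\<dots> = 2 * card E" by simp
  finally show ?thesis .
qed

lemma possible_edges_fin: "finite (possible_edges n)"
proof -
  have "possible_edges n \<subseteq> Pow (C0 n)" unfolding possible_edges_def by blast
  then show ?thesis by (rule finite_subset) (simp add: possible_edges_finite)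
qed

definition goodU :: "(nat \<Rightarrow> nat) set \<Rightarrow> bool" where
  "goodU U \<longleftrightarrow> (\<forall>T \<subseteq> U. T \<noteq> {} \<longrightarrow> (\<exists>i. card {y\<in>T. y i \<noteq> 0} = 1))"

lemma deficiency_zero:
  assumes E: "E \<subseteq> possible_edges n" and m: "matching E" and good: "goodU (\<Union>E)"
  shows "deficiency E = 0"
proof -
  have c2: "\<forall>e\<in>E. card e = 2" using E unfolding possible_edges_def by auto
  have finE: "finite E" using E possible_edges_fin[of n] by (rule finite_subset)
  have cardU: "card (complexes E) = 2 * card E"
    unfolding complexes_def using card_union_matching[OF m c2] .
  have lc: "card (linkage_classes E) = card E" using lc_matching[OF m c2] by simp
  have "\<forall>e\<in>E. \<exists>a b. e = {a, b} \<and> a \<noteq> b"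
    using c2 by (auto simp: card_2_iff)
  then obtain A B where AB: "\<And>e. e \<in> E \<Longrightarrow> e = {A e, B e} \<and> A e \<noteq> B e"
    by metis
  define vec where "vec e = (\<lambda>i. real (B e i) - real (A e i))" for e
  define V where "V = vec ` E"
  have P: "\<exists>i e0. e0 \<in> T0 \<and> vec e0 i \<noteq> 0 \<and> (\<forall>e\<in>T0. e \<noteq> e0 \<longrightarrow> vec e i = 0)"
    if T0: "T0 \<subseteq> E" "T0 \<noteq> {}" for T0
  proof -
    have sub: "\<Union>T0 \<subseteq> \<Union>E" using T0 by blast
    have ne: "\<Union>T0 \<noteq> {}"
    proof -
      obtain e where e: "e \<in> T0" using T0(2) by blast
      then have "card e = 2" using c2 T0(1) by blast
      then have "e \<noteq> {}" by auto
      then show ?thesis using e by blast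
    qed
    obtain i where "card {y\<in>\<Union>T0. y i \<noteq> 0} = 1"
      using good[unfolded goodU_def, rule_format, OF sub ne] by blast
    then obtain z where z: "{y\<in>\<Union>T0. y i \<noteq> 0} = {z}" by (rule card_1_singletonE)
    have zin: "z \<in> {y\<in>\<Union>T0. y i \<noteq> 0}" unfolding z by simp
    then have "z \<in> \<Union>T0" "z i \<noteq> 0" by simp_all
    then obtain e0 where e0: "e0 \<in> T0" "z \<in> e0" by blast
    have e0E: "e0 \<in> E" using e0 T0 by blast
    have oth: "w i = 0" if "w \<in> \<Union>T0" "w \<noteq> z" for w
    proof (rule ccontr)
      assume "w i \<noteq> 0"
      then have "w \<in> {y\<in>\<Union>T0. y i \<noteq> 0}" using that by simp
      then have "w \<in> {z}" by (simp only: z)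
      then show False using that by simp
    qed
    have "vec e0 i \<noteq> 0"
    proof -
      have "A e0 \<in> \<Union>T0" "B e0 \<in> \<Union>T0" using AB[OF e0E] e0 by blast+
      moreover have "z = A e0 \<or> z = B e0" using AB[OF e0E] e0 by blast
      ultimately show ?thesis
      proof (elim conjE disjE)
        assume a: "A e0 \<in> \<Union>T0" "B e0 \<in> \<Union>T0" "z = A e0"
        then have "B e0 i = 0" using oth[of "B e0"] AB[OF e0E] by auto
        then show ?thesis using \<open>z i \<noteq> 0\<close> a(3) unfolding vec_def by simp
      next
        assume a: "A e0 \<in> \<Union>T0" "B e0 \<in> \<Union>T0" "z = B e0"
        then have "A e0 i = 0" using oth[of "A e0"] AB[OF e0E] by auto
        then show ?thesis using \<open>z i \<noteq> 0\<close> a(3) unfolding vec_def by simp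
      qed
    qed
    moreover have "vec e i = 0" if "e \<in> T0" "e \<noteq> e0" for e
    proof -
      have eE: "e \<in> E" using that T0 by blast
      have "e \<inter> e0 = {}" using m eE e0E that(2) unfolding matching_def by blast
      then have "A e \<noteq> z" "B e \<noteq> z" using AB[OF eE] e0 by blast+
      moreover have "A e \<in> \<Union>T0" "B e \<in> \<Union>T0" using AB[OF eE] that(1) by blast+
      ultimately have "A e i = 0" "B e i = 0" using oth by auto
      then show ?thesis unfolding vec_def by simp
    qed
    ultimately show ?thesis using e0 by blast
  qed
  have inj: "inj_on vec E"
  proof (rule inj_onI)
    fix e f assume ef: "e \<in> E" "f \<in> E" "vec e = vec f"
    show "e = f"
    proof (rule ccontr)
      assume "e \<noteq> f"
      from P[of "{e, f}"] ef obtain i e0 where "e0 \<in> {e,f}" "vec e0 i \<noteq> 0"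
        "\<forall>x\<in>{e,f}. x \<noteq> e0 \<longrightarrow> vec x i = 0" by auto
      then show False using ef \<open>e \<noteq> f\<close> by auto
    qed
  qed
  have cardV: "card V = card E" unfolding V_def using inj by (simp add: card_image)
  have finV: "finite V" unfolding V_def using finE by simp
  have indep: "FV.independent V"
  proof (rule peel_independent[OF finV], intro allI impI)
    fix T assume T: "T \<subseteq> V" "T \<noteq> {}"
    define T0 where "T0 = {e\<in>E. vec e \<in> T}"
    have "T0 \<subseteq> E" "T0 \<noteq> {}" using T unfolding T0_def V_def by auto
    from P[OF this] obtain i e0 where ie: "e0 \<in> T0" "vec e0 i \<noteq> 0"
      "\<forall>e\<in>T0. e \<noteq> e0 \<longrightarrow> vec e i = 0" by blast
    have "{v\<in>T. v i \<noteq> 0} = {vec e0}"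
    proof
      show "{v\<in>T. v i \<noteq> 0} \<subseteq> {vec e0}"
      proof
        fix v assume v: "v \<in> {v\<in>T. v i \<noteq> 0}"
        then obtain e where "e \<in> E" "v = vec e" using T unfolding V_def by auto
        then have "e \<in> T0" using v unfolding T0_def by auto
        then show "v \<in> {vec e0}" using ie v \<open>v = vec e\<close> by auto
      qed
      show "{vec e0} \<subseteq> {v\<in>T. v i \<noteq> 0}" using ie unfolding T0_def by auto
    qed
    then have "card {v\<in>T. v i \<noteq> 0} = 1" by simp
    then show "\<exists>i. card {v\<in>T. v i \<noteq> 0} = 1" by (rule exI)
  qed
  have VR: "V \<subseteq> reaction_vectors E"
  proof
    fix v assume "v \<in> V"
    then obtain e where e: "e \<in> E" "v = vec e" unfolding V_def by auto
    then have "(A e, B e) \<in> link_rel E" using AB[OF e(1)] unfolding link_rel_def by auto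
    then show "v \<in> reaction_vectors E" unfolding reaction_vectors_def e(2) vec_def by blast
  qed
  have RV: "reaction_vectors E \<subseteq> FV.span V"
  proof
    fix r assume "r \<in> reaction_vectors E"
    then obtain y y' where yy: "r = (\<lambda>i. real (y' i) - real (y i))" "{y, y'} \<in> E"
      unfolding reaction_vectors_def link_rel_def by auto
    define e where "e = {y, y'}"
    have eE: "e \<in> E" using yy e_def by simp
    have "vec e \<in> FV.span V" unfolding V_def using eE by (intro FV.span_base) auto
    moreover have "r = vec e \<or> r = - vec e"
    proof -
      have "{y, y'} = {A e, B e}" "A e \<noteq> B e" using AB[OF eE] e_def by auto
      then have "(y = A e \<and> y' = B e) \<or> (y = B e \<and> y' = A e)" by (auto simp: doubleton_eq_iff)
      then show ?thesis unfolding yy(1) vec_def by (auto simp: fun_eq_iff)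
    qed
    ultimately show "r \<in> FV.span V" using FV.span_neg by auto
  qed
  have "stoich_dim E = card E"
    unfolding stoich_dim_FV
    using FV.basis_card_eq_dim[OF VR RV indep] cardV by simp
  then show ?thesis unfolding deficiency_def using cardU lc by simp
qed




definition PM :: "'a set \<Rightarrow> 'a set set set" where
  "PM U = {M. (\<forall>e\<in>M. e \<subseteq> U \<and> card e = 2) \<and> (\<forall>e\<in>M. \<forall>f\<in>M. e \<noteq> f \<longrightarrow> e \<inter> f = {}) \<and> \<Union>M = U}"

lemma PM_finite: "finite U \<Longrightarrow> finite (PM U)"
proof -
  assume "finite U"
  have "PM U \<subseteq> Pow (Pow U)" unfolding PM_def by blast
  then show ?thesis by (rule finite_subset) (simp add: \<open>finite U\<close>)
qed

lemma PM_transport: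
  assumes g: "bij_betw g U U'" and fin: "finite U'"
  shows "card (PM U) \<le> card (PM U')"
proof -
  define phi where "phi M = (\<lambda>e. g ` e) ` M" for M :: "'a set set"
  have inj: "inj_on g U" using g by (simp add: bij_betw_def)
  have img: "g ` U = U'" using g by (simp add: bij_betw_def)
  have into: "phi M \<in> PM U'" if M: "M \<in> PM U" for M
  proof -
    have Msub: "\<forall>e\<in>M. e \<subseteq> U \<and> card e = 2" using M unfolding PM_def by blast
    have Mdis: "\<forall>e\<in>M. \<forall>f\<in>M. e \<noteq> f \<longrightarrow> e \<inter> f = {}" using M unfolding PM_def by blast
    have MU: "\<Union>M = U" using M unfolding PM_def by blast
    have "\<forall>e'\<in>phi M. e' \<subseteq> U' \<and> card e' = 2"
    proof
      fix e' assume "e' \<in> phi M"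
      then obtain e where e: "e \<in> M" "e' = g ` e" unfolding phi_def by blast
      have "e \<subseteq> U" "card e = 2" using Msub e(1) by auto
      moreover have "card (g ` e) = card e"
        using inj_on_subset[OF inj \<open>e \<subseteq> U\<close>] by (rule card_image)
      ultimately show "e' \<subseteq> U' \<and> card e' = 2" using img e(2) by auto
    qed
    moreover have "\<forall>e'\<in>phi M. \<forall>f'\<in>phi M. e' \<noteq> f' \<longrightarrow> e' \<inter> f' = {}"
    proof (intro ballI impI)
      fix e' f' assume "e' \<in> phi M" "f' \<in> phi M" "e' \<noteq> f'"
      then obtain e f where ef: "e \<in> M" "f \<in> M" "e' = g ` e" "f' = g ` f" unfolding phi_def by blast
      then have "e \<noteq> f" using \<open>e' \<noteq> f'\<close> by blast
      then have "e \<inter> f = {}" using Mdis ef by blast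
      moreover have "g ` (e \<inter> f) = g ` e \<inter> g ` f"
        using inj_on_image_Int[OF inj] Msub ef by blast
      ultimately show "e' \<inter> f' = {}" using ef by simp
    qed
    moreover have "\<Union>(phi M) = U'" unfolding phi_def image_Union[symmetric] MU img ..
    ultimately show ?thesis unfolding PM_def by blast
  qed
  have "inj_on phi (PM U)"
  proof (rule inj_onI)
    fix M M' assume M: "M \<in> PM U" and M': "M' \<in> PM U" and eq: "phi M = phi M'"
    have Ms: "\<forall>e\<in>M. e \<subseteq> U" "\<forall>e\<in>M'. e \<subseteq> U" using M M' unfolding PM_def by blast+
    have sub: "M \<subseteq> M'" if "phi M = phi M'" "\<forall>e\<in>M. e \<subseteq> U" "\<forall>e\<in>M'. e \<subseteq> U" for M M'
    proof
      fix e assume e: "e \<in> M"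
      then have "g ` e \<in> phi M" unfolding phi_def by blast
      then have "g ` e \<in> phi M'" using that(1) by simp
      then obtain e' where e': "e' \<in> M'" "g ` e = g ` e'" unfolding phi_def by blast
      have "e \<subseteq> U" "e' \<subseteq> U" using that(2,3) e e'(1) by blast+
      then have "e = e'" using inj_on_image_eq_iff[OF inj, of e e'] e'(2) by simp
      then show "e \<in> M'" using e' by simp
    qed
    show "M = M'" using sub[OF eq Ms] sub[OF eq[symmetric] Ms(2) Ms(1)] by (rule subset_antisym)
  qed
  moreover have "phi ` PM U \<subseteq> PM U'" using into by blast
  ultimately show ?thesis using PM_finite[OF fin] by (rule card_inj_on_le)
qed

lemma PM_card_eq:
  assumes "finite U" "finite U'" "card U = card U'"
  shows "card (PM U) = card (PM U')"
proof -
  obtain g where g: "bij_betw g U U'" using finite_same_card_bij[OF assms] by blast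
  have "card (PM U) \<le> card (PM U')" using PM_transport[OF g assms(2)] .
  moreover have "card (PM U') \<le> card (PM U)"
    using PM_transport[OF bij_betw_the_inv_into[OF g] assms(1)] .
  ultimately show ?thesis by simp
qed

lemma PM_nonempty:
  assumes "finite U" "card U = 2 * j"
  shows "PM U \<noteq> {}"
  using assms
proof (induction j arbitrary: U)
  case 0
  then have "U = {}" by simp
  then have "{} \<in> PM U" unfolding PM_def by simp
  then show ?case by blast
next
  case (Suc j)
  then have "card U \<ge> 2" by simp
  then obtain a b where ab: "a \<in> U" "b \<in> U" "a \<noteq> b"
    by (metis One_nat_def Suc_1 card_le_Suc_iff numeral_2_eq_2 insertCI)
  define U' where "U' = U - {a, b}"
  have "card U' = 2 * j" unfolding U'_def using Suc.prems ab by (simp add: card_Diff_subset)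
  moreover have "finite U'" unfolding U'_def using Suc.prems by simp
  ultimately obtain M where M: "M \<in> PM U'" using Suc.IH by blast
  have "insert {a, b} M \<in> PM U"
  proof -
    have "\<forall>e\<in>M. e \<subseteq> U' \<and> card e = 2" using M unfolding PM_def by blast
    moreover have "\<forall>e\<in>M. \<forall>f\<in>M. e \<noteq> f \<longrightarrow> e \<inter> f = {}" using M unfolding PM_def by blast
    moreover have "\<Union>M = U'" using M unfolding PM_def by blast
    ultimately show ?thesis unfolding PM_def U'_def using ab by auto
  qed
  then show ?case by blast
qed




lemma count_fibers:
  fixes Q :: "(nat \<Rightarrow> nat) set \<Rightarrow> bool"
  shows "card {E. E \<subseteq> possible_edges n \<and> matching E \<and> card E = k \<and> Q (\<Union>E)}
       = card {U. U \<subseteq> C0 n \<and> card U = 2*k \<and> Q U} * card (PM {..<2*k})"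
proof -
  define S where "S = {U. U \<subseteq> C0 n \<and> card U = 2*k \<and> Q U}"
  have eq: "{E. E \<subseteq> possible_edges n \<and> matching E \<and> card E = k \<and> Q (\<Union>E)} = (\<Union>U\<in>S. PM U)"
  proof
    show "{E. E \<subseteq> possible_edges n \<and> matching E \<and> card E = k \<and> Q (\<Union>E)} \<subseteq> (\<Union>U\<in>S. PM U)"
    proof
      fix E assume "E \<in> {E. E \<subseteq> possible_edges n \<and> matching E \<and> card E = k \<and> Q (\<Union>E)}"
      then have E: "E \<subseteq> possible_edges n" "matching E" "card E = k" "Q (\<Union>E)" by auto
      have c2: "\<forall>e\<in>E. card e = 2" "\<forall>e\<in>E. e \<subseteq> C0 n" using E(1) unfolding possible_edges_def by auto
      have "card (\<Union>E) = 2 * k" using card_union_matching[OF E(2) c2(1)] E(3) by simp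
      moreover have "\<Union>E \<subseteq> C0 n" using c2(2) by blast
      ultimately have "\<Union>E \<in> S" unfolding S_def using E(4) by blast
      moreover have "E \<in> PM (\<Union>E)" unfolding PM_def using c2(1) E(2) unfolding matching_def by blast
      ultimately show "E \<in> (\<Union>U\<in>S. PM U)" by blast
    qed
    show "(\<Union>U\<in>S. PM U) \<subseteq> {E. E \<subseteq> possible_edges n \<and> matching E \<and> card E = k \<and> Q (\<Union>E)}"
    proof
      fix E assume "E \<in> (\<Union>U\<in>S. PM U)"
      then obtain U where U: "U \<in> S" "E \<in> PM U" by blast
      have Ep: "\<forall>e\<in>E. e \<subseteq> U \<and> card e = 2" "matching E" "\<Union>E = U"
        using U(2) unfolding PM_def matching_def by blast+
      have "E \<subseteq> possible_edges n" using Ep(1) U(1) unfolding S_def possible_edges_def by blast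
      moreover have "card E = k"
        using card_union_matching[OF Ep(2)] Ep U(1) unfolding S_def by auto
      ultimately show "E \<in> {E. E \<subseteq> possible_edges n \<and> matching E \<and> card E = k \<and> Q (\<Union>E)}"
        using Ep U(1) unfolding S_def by blast
    qed
  qed
  have finS: "finite S"
  proof -
    have "S \<subseteq> Pow (C0 n)" unfolding S_def by blast
    then show ?thesis by (rule finite_subset) (simp add: possible_edges_finite)
  qed
  have finU: "finite U" if "U \<in> S" for U
  proof -
    have "U \<subseteq> C0 n" using that unfolding S_def by blast
    then show ?thesis by (rule finite_subset) (rule possible_edges_finite)
  qed
  have "card (\<Union>U\<in>S. PM U) = (\<Sum>U\<in>S. card (PM U))"
  proof (rule card_UN_disjoint[OF finS])
    show "\<forall>U\<in>S. finite (PM U)" using finU PM_finite by blast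
    show "\<forall>U\<in>S. \<forall>U'\<in>S. U \<noteq> U' \<longrightarrow> PM U \<inter> PM U' = {}"
    proof (intro ballI impI)
      fix U U' :: "(nat \<Rightarrow> nat) set" assume "U \<noteq> U'"
      show "PM U \<inter> PM U' = {}"
      proof (rule ccontr)
        assume "PM U \<inter> PM U' \<noteq> {}"
        then obtain E where "E \<in> PM U" "E \<in> PM U'" by blast
        then have "\<Union>E = U" "\<Union>E = U'" unfolding PM_def by simp_all
        then show False using \<open>U \<noteq> U'\<close> by simp
      qed
    qed
  qed
  also have "\<dots> = (\<Sum>U\<in>S. card (PM {..<2*k}))"
  proof (rule sum.cong[OF refl])
    fix U assume "U \<in> S"
    then show "card (PM U) = card (PM {..<2*k})"
      using finU[of U] by (intro PM_card_eq) (auto simp: S_def)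
  qed
  also have "\<dots> = card S * card (PM {..<2*k})" by simp
  finally show ?thesis using eq unfolding S_def by simp
qed

lemma ratio_bound:
  assumes p: "0 < p" "p < 1" and kN: "2*k \<le> card (C0 n)"
  shows "cond_prob_def0_paired n p k \<ge>
     real (card {U. U \<subseteq> C0 n \<and> card U = 2*k \<and> goodU U}) / real (card {U. U \<subseteq> C0 n \<and> card U = 2*k})"
proof -
  define q where "q = p ^ k * (1 - p) ^ (card (possible_edges n) - k)"
  have q: "q > 0" unfolding q_def using p by simp
  define D where "D = {E. E \<subseteq> possible_edges n \<and> matching E \<and> card E = k \<and> True}"
  define G where "G = {E. E \<subseteq> possible_edges n \<and> matching E \<and> card E = k \<and> goodU (\<Union>E)}"
  define pm where "pm = card (PM {..<2*k})"
  have pm: "pm > 0" unfolding pm_def using PM_nonempty[of "{..<2*k}" k] PM_finite[of "{..<2*k}"]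
    by (simp add: card_gt_0_iff)
  have cD: "card D = card {U. U \<subseteq> C0 n \<and> card U = 2*k} * pm"
    unfolding D_def pm_def using count_fibers[of n k "\<lambda>_. True"] by simp
  have cG: "card G = card {U. U \<subseteq> C0 n \<and> card U = 2*k \<and> goodU U} * pm"
    unfolding G_def pm_def using count_fibers[of n k goodU] by simp
  have cU: "card {U. U \<subseteq> C0 n \<and> card U = 2*k} > 0"
    using n_subsets[OF possible_edges_finite[of n], of "2*k"] kN by simp
  have den: "er_event_prob n p (i_paired k) = real (card D) * q"
  proof -
    have "{E. E \<subseteq> possible_edges n \<and> i_paired k E} = D"
      unfolding D_def using i_paired_iff[of _ n k] by auto
    moreover have "er_prob n p E = q" if "E \<in> D" for E
      using that unfolding D_def er_prob_def q_def by simp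
    ultimately show ?thesis unfolding er_event_prob_def by simp
  qed
  have num: "er_event_prob n p (\<lambda>E. deficiency E = 0 \<and> i_paired k E) \<ge> real (card G) * q"
  proof -
    have sub: "G \<subseteq> {E. E \<subseteq> possible_edges n \<and> (deficiency E = 0 \<and> i_paired k E)}"
    proof
      fix E assume "E \<in> G"
      then have E: "E \<subseteq> possible_edges n" "matching E" "card E = k" "goodU (\<Union>E)"
        unfolding G_def by simp_all
      have "deficiency E = 0" using deficiency_zero[OF E(1,2,4)] .
      moreover have "i_paired k E" using i_paired_iff[OF E(1)] E(2,3) by simp
      ultimately show "E \<in> {E. E \<subseteq> possible_edges n \<and> (deficiency E = 0 \<and> i_paired k E)}"
        using E(1) by simp
    qed
    have fin: "finite {E. E \<subseteq> possible_edges n \<and> (deficiency E = 0 \<and> i_paired k E)}"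
      by (rule finite_subset[of _ "Pow (possible_edges n)"]) (auto simp: possible_edges_fin)
    have "real (card G) * q = (\<Sum>E\<in>G. er_prob n p E)"
      using q unfolding G_def er_prob_def q_def by simp
    also have "\<dots> \<le> (\<Sum>E\<in>{E. E \<subseteq> possible_edges n \<and> (deficiency E = 0 \<and> i_paired k E)}. er_prob n p E)"
      by (rule sum_mono2[OF fin sub]) (use p in \<open>simp add: er_prob_def\<close>)
    finally show ?thesis unfolding er_event_prob_def .
  qed
  have "real (card {U. U \<subseteq> C0 n \<and> card U = 2*k \<and> goodU U}) / real (card {U. U \<subseteq> C0 n \<and> card U = 2*k})
      = (real (card G) * q) / (real (card D) * q)"
    using pm q unfolding cG cD by (simp add: field_simps)
  also have "\<dots> \<le> cond_prob_def0_paired n p k"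
    unfolding cond_prob_def0_paired_def den
    by (rule divide_right_mono[OF num]) (use q in simp)
  finally show ?thesis .
qed




definition pairv :: "nat \<Rightarrow> nat \<Rightarrow> nat \<Rightarrow> nat" where
  "pairv a b = (\<lambda>j. unitv a j + unitv b j)"

definition PairsIn :: "nat set \<Rightarrow> (nat \<Rightarrow> nat) set" where
  "PairsIn W = {pairv a b | a b. a < b \<and> a \<in> W \<and> b \<in> W}"

lemma pairv_nz: "pairv a b i \<noteq> 0 \<longleftrightarrow> i = a \<or> i = b"
  unfolding pairv_def unitv_def by auto

lemma pairv_supp: "{i. pairv a b i \<noteq> 0} = {a, b}"
  using pairv_nz by auto

lemma pairv_comm: "pairv a b = pairv b a"
  unfolding pairv_def by (auto simp: fun_eq_iff)

lemma pairv_eq_iff_supp: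
  assumes "{i. x i \<noteq> 0} = {i. y i \<noteq> 0}" "x \<in> PairsIn W" "y \<in> PairsIn W"
  shows "x = y"
proof -
  obtain a b where x: "x = pairv a b" "a < b" using assms(2) unfolding PairsIn_def by blast
  obtain c d where y: "y = pairv c d" "c < d" using assms(3) unfolding PairsIn_def by blast
  have "{a, b} = {c, d}" using assms(1) unfolding x y pairv_supp .
  then have "(a = c \<and> b = d) \<or> (a = d \<and> b = c)" by (simp add: doubleton_eq_iff)
  then show ?thesis using x y pairv_comm by auto
qed

lemma card_PairsIn:
  assumes "finite W"
  shows "card (PairsIn W) = card W choose 2"
proof -
  have "bij_betw (\<lambda>x. {i. x i \<noteq> 0}) (PairsIn W) {S. S \<subseteq> W \<and> card S = 2}"
  proof (rule bij_betwI')
    fix x y assume "x \<in> PairsIn W" "y \<in> PairsIn W"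
    then show "({i. x i \<noteq> 0} = {i. y i \<noteq> 0}) = (x = y)"
      using pairv_eq_iff_supp by blast
  next
    fix x assume "x \<in> PairsIn W"
    then obtain a b where x: "x = pairv a b" "a < b" "a \<in> W" "b \<in> W" unfolding PairsIn_def by blast
    show "{i. x i \<noteq> 0} \<in> {S. S \<subseteq> W \<and> card S = 2}"
      unfolding x(1) pairv_supp using x by auto
  next
    fix S assume "S \<in> {S. S \<subseteq> W \<and> card S = 2}"
    then have S: "S \<subseteq> W" "card S = 2" by auto
    then obtain a b where ab: "S = {a, b}" "a \<noteq> b" by (auto simp: card_2_iff)
    define a' where "a' = min a b"
    define b' where "b' = max a b"
    have "a' < b'" "S = {a', b'}" using ab unfolding a'_def b'_def by (auto simp: min_def max_def)
    then have "pairv a' b' \<in> PairsIn W" "{i. pairv a' b' i \<noteq> 0} = S"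
      using S(1) unfolding PairsIn_def pairv_supp by auto
    then show "\<exists>x\<in>PairsIn W. S = {i. x i \<noteq> 0}" by metis
  qed
  then have "card (PairsIn W) = card {S. S \<subseteq> W \<and> card S = 2}" by (rule bij_betw_same_card)
  also have "\<dots> = card W choose 2" using n_subsets[OF assms] .
  finally show ?thesis .
qed

lemma PairsIn_mono: "W \<subseteq> W' \<Longrightarrow> PairsIn W \<subseteq> PairsIn W'"
  unfolding PairsIn_def by blast

lemma PairsIn_C0: "PairsIn {..<n} \<subseteq> C0 n"
proof
  fix x assume "x \<in> PairsIn {..<n}"
  then obtain a b where x: "x = pairv a b" "a < b" "b < n" unfolding PairsIn_def by blast
  then have "x \<in> {(\<lambda>j. unitv i j + unitv i' j) | i i'. i \<le> i' \<and> i' < n}"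
    unfolding pairv_def by (intro CollectI exI[of _ a] exI[of _ b]) auto
  then show "x \<in> C0 n" unfolding C0_def by blast
qed

lemma card_C0_ge: "card (C0 n) \<ge> n choose 2"
proof -
  have "card (PairsIn {..<n}) \<le> card (C0 n)"
    by (rule card_mono[OF possible_edges_finite PairsIn_C0])
  then show ?thesis using card_PairsIn[of "{..<n}"] by simp
qed

lemma Sing_sub: "C0 n - PairsIn {..<n} \<subseteq> {\<lambda>_. 0} \<union> unitv ` {..<n} \<union> (\<lambda>i. pairv i i) ` {..<n}"
proof
  fix x assume x: "x \<in> C0 n - PairsIn {..<n}"
  then have "x \<in> C0 n" by simp
  then consider "x = (\<lambda>_. 0)" | i where "i < n" "x = unitv i"
    | i i' where "i \<le> i'" "i' < n" "x = pairv i i'"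
    unfolding C0_def pairv_def by blast
  then show "x \<in> {\<lambda>_. 0} \<union> unitv ` {..<n} \<union> (\<lambda>i. pairv i i) ` {..<n}"
  proof cases
    case 1 then show ?thesis by simp
  next
    case 2 then show ?thesis by simp
  next
    case (3 i i')
    show ?thesis
    proof (cases "i = i'")
      case True then show ?thesis using 3 by simp
    next
      case False
      then have "i < i'" using 3 by simp
      then have "x \<in> PairsIn {..<n}" using 3 unfolding PairsIn_def
        by (intro CollectI exI[of _ i] exI[of _ i']) simp
      then show ?thesis using x by simp
    qed
  qed
qed

lemma card_Sing: "card (C0 n - PairsIn {..<n}) \<le> 2 * n + 1"
proof -
  have "card (C0 n - PairsIn {..<n}) \<le> card ({\<lambda>_. 0} \<union> unitv ` {..<n} \<union> (\<lambda>i. pairv i i) ` {..<n})"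
    by (rule card_mono[OF _ Sing_sub]) simp
  also have "\<dots> \<le> card ({\<lambda>_::nat. 0::nat} \<union> unitv ` {..<n}) + card ((\<lambda>i. pairv i i) ` {..<n})"
    by (rule card_Un_le)
  also have "\<dots> \<le> (card {\<lambda>_::nat. 0::nat} + card (unitv ` {..<n})) + card ((\<lambda>i. pairv i i) ` {..<n})"
    by (rule add_right_mono[OF card_Un_le])
  also have "\<dots> \<le> (1 + n) + n"
    using card_image_le[of "{..<n}" unitv] card_image_le[of "{..<n}" "\<lambda>i. pairv i i"] by simp
  finally show ?thesis by simp
qed




lemma card_filter_sum: "finite A \<Longrightarrow> card {x\<in>A. P x} = (\<Sum>x\<in>A. if P x then 1 else 0 :: nat)"
proof -
  assume "finite A"
  have "card {x\<in>A. P x} = (\<Sum>x\<in>{x\<in>A. P x}. 1 :: nat)" by (rule card_eq_sum)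
  also have "\<dots> = (\<Sum>x\<in>A. if P x then 1 else 0 :: nat)" using \<open>finite A\<close> by (rule sum.inter_filter)
  finally show ?thesis .
qed

lemma finite_PairsIn: "finite W \<Longrightarrow> finite (PairsIn W)"
proof -
  assume fW: "finite W"
  have "PairsIn W \<subseteq> (\<lambda>(a,b). pairv a b) ` (W \<times> W)"
  proof
    fix x assume "x \<in> PairsIn W"
    then obtain a b where "x = pairv a b" "a \<in> W" "b \<in> W" unfolding PairsIn_def by blast
    then show "x \<in> (\<lambda>(a,b). pairv a b) ` (W \<times> W)" by (intro image_eqI[of _ _ "(a,b)"]) auto
  qed
  then show ?thesis by (rule finite_subset) (simp add: fW)
qed

lemma core_struct:
  assumes U: "U \<subseteq> PairsIn {..<n}" "finite U" "card U \<le> n" and bad: "\<not> goodU U"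
  shows "\<exists>T W. T \<subseteq> U \<and> W \<subseteq> {..<n} \<and> card W = card T \<and> T \<subseteq> PairsIn W \<and> 3 \<le> card T"
proof -
  obtain T where T: "T \<subseteq> U" "T \<noteq> {}" "\<forall>i. card {y\<in>T. y i \<noteq> 0} \<noteq> 1"
    using bad unfolding goodU_def by blast
  have finT: "finite T" using T(1) U(2) by (rule finite_subset)
  define sp where "sp = {i. \<exists>y\<in>T. y i \<noteq> 0}"
  have Tp: "\<exists>a b. y = pairv a b \<and> a < b \<and> b < n" if "y \<in> T" for y
    using that T(1) U(1) unfolding PairsIn_def by blast
  have sp_n: "sp \<subseteq> {..<n}"
  proof
    fix i assume "i \<in> sp"
    then obtain y where y: "y \<in> T" "y i \<noteq> 0" unfolding sp_def by blast
    obtain a b where ab: "y = pairv a b" "a < b" "b < n" using Tp[OF y(1)] by blast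
    then have "i = a \<or> i = b" using y(2) pairv_nz by simp
    then show "i \<in> {..<n}" using ab by auto
  qed
  have finsp: "finite sp" using sp_n finite_subset by blast
  have TPsp: "T \<subseteq> PairsIn sp"
  proof
    fix y assume y: "y \<in> T"
    obtain a b where ab: "y = pairv a b" "a < b" "b < n" using Tp[OF y] by blast
    have "y a \<noteq> 0" "y b \<noteq> 0" using ab(1) pairv_nz by simp_all
    then have "a \<in> sp" "b \<in> sp" using y unfolding sp_def by blast+
    then show "y \<in> PairsIn sp" unfolding PairsIn_def using ab by blast
  qed
  have ysp: "card {i\<in>sp. y i \<noteq> 0} = 2" if yT: "y \<in> T" for y
  proof -
    obtain a b where ab: "y = pairv a b" "a < b" "b < n" using Tp[OF yT] by blast
    have "y a \<noteq> 0" "y b \<noteq> 0" using ab(1) pairv_nz by simp_all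
    then have "a \<in> sp" "b \<in> sp" using yT unfolding sp_def by blast+
    then have "{i\<in>sp. y i \<noteq> 0} = {a, b}" using ab(1) pairv_nz by auto
    then show ?thesis using ab(2) by simp
  qed
  have isp: "card {y\<in>T. y i \<noteq> 0} \<ge> 2" if "i \<in> sp" for i
  proof -
    have "{y\<in>T. y i \<noteq> 0} \<noteq> {}" using that unfolding sp_def by blast
    then have "card {y\<in>T. y i \<noteq> 0} \<noteq> 0" using finT by simp
    moreover have "card {y\<in>T. y i \<noteq> 0} \<noteq> 1" using T(3) by blast
    ultimately show ?thesis by linarith
  qed
  have "2 * card sp = (\<Sum>i\<in>sp. 2)" by simp
  also have "\<dots> \<le> (\<Sum>i\<in>sp. card {y\<in>T. y i \<noteq> 0})" using isp by (intro sum_mono) auto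
  also have "\<dots> = (\<Sum>i\<in>sp. \<Sum>y\<in>T. if y i \<noteq> 0 then 1 else 0)"
    using finT by (intro sum.cong refl card_filter_sum)
  also have "\<dots> = (\<Sum>y\<in>T. \<Sum>i\<in>sp. if y i \<noteq> 0 then 1 else 0)" by (rule sum.swap)
  also have "\<dots> = (\<Sum>y\<in>T. card {i\<in>sp. y i \<noteq> 0})"
    using finsp by (intro sum.cong refl card_filter_sum[symmetric])
  also have "\<dots> = (\<Sum>y\<in>T. 2)" using ysp by (intro sum.cong) auto
  also have "\<dots> = 2 * card T" by simp
  finally have spT: "card sp \<le> card T" by simp
  have "card T \<le> card U" using U(2) T(1) by (rule card_mono)
  then have "card T \<le> card {..<n}" using U(3) by simp
  then obtain W where W: "sp \<subseteq> W" "W \<subseteq> {..<n}" "card W = card T"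
    using exists_subset_between[OF _ _ sp_n] spT by (metis finite_lessThan)
  have "T \<subseteq> PairsIn W" using TPsp PairsIn_mono[OF W(1)] by blast
  moreover have "3 \<le> card T"
  proof -
    have "card T \<le> card (PairsIn sp)" by (rule card_mono[OF finite_PairsIn[OF finsp] TPsp])
    also have "\<dots> = card sp choose 2" using card_PairsIn[OF finsp] .
    also have "\<dots> \<le> card T choose 2" using spT by (rule binomial_right_mono)
    finally have le: "card T \<le> card T choose 2" .
    have "card T \<noteq> 0" using T(2) finT by simp
    moreover have "card T \<noteq> 1"
    proof
      assume h: "card T = 1"
      with le show False by (simp add: binomial_eq_0)
    qed
    moreover have "card T \<noteq> 2"
    proof
      assume h: "card T = 2"
      with le show False by simp
    qed
    ultimately show ?thesis by linarith
  qed
  ultimately show ?thesis using T(1) W(2,3) by blast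
qed




lemma supersets_card:
  assumes V: "finite V" and T: "T \<subseteq> V" and m: "card T \<le> m"
  shows "card {U. U \<subseteq> V \<and> card U = m \<and> T \<subseteq> U} = (card V - card T) choose (m - card T)"
proof -
  have finT: "finite T" using T V by (rule finite_subset)
  have "bij_betw (\<lambda>U. U - T) {U. U \<subseteq> V \<and> card U = m \<and> T \<subseteq> U} {X. X \<subseteq> V - T \<and> card X = m - card T}"
  proof (rule bij_betwI[where g = "\<lambda>X. X \<union> T"])
    show "(\<lambda>U. U - T) \<in> {U. U \<subseteq> V \<and> card U = m \<and> T \<subseteq> U} \<rightarrow> {X. X \<subseteq> V - T \<and> card X = m - card T}"
    proof
      fix U assume "U \<in> {U. U \<subseteq> V \<and> card U = m \<and> T \<subseteq> U}"
      then have U: "U \<subseteq> V" "card U = m" "T \<subseteq> U" by auto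
      have "card (U - T) = card U - card T" using U(3) finT by (rule card_Diff_subset[rotated])
      then show "U - T \<in> {X. X \<subseteq> V - T \<and> card X = m - card T}" using U by auto
    qed
    show "(\<lambda>X. X \<union> T) \<in> {X. X \<subseteq> V - T \<and> card X = m - card T} \<rightarrow> {U. U \<subseteq> V \<and> card U = m \<and> T \<subseteq> U}"
    proof
      fix X assume "X \<in> {X. X \<subseteq> V - T \<and> card X = m - card T}"
      then have X: "X \<subseteq> V - T" "card X = m - card T" by auto
      have finX: "finite X" using X(1) V by (meson finite_Diff finite_subset)
      have "card (X \<union> T) = card X + card T" using X(1) finX finT by (intro card_Un_disjoint) auto
      then show "X \<union> T \<in> {U. U \<subseteq> V \<and> card U = m \<and> T \<subseteq> U}" using X m T by auto
    qed
    show "U - T \<union> T = U" if "U \<in> {U. U \<subseteq> V \<and> card U = m \<and> T \<subseteq> U}" for U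
      using that by auto
    show "X \<union> T - T = X" if "X \<in> {X. X \<subseteq> V - T \<and> card X = m - card T}" for X
      using that by auto
  qed
  then have "card {U. U \<subseteq> V \<and> card U = m \<and> T \<subseteq> U} = card {X. X \<subseteq> V - T \<and> card X = m - card T}"
    by (rule bij_betw_same_card)
  also have "\<dots> = card (V - T) choose (m - card T)" using V by (intro n_subsets) simp
  also have "card (V - T) = card V - card T" using T finT by (rule card_Diff_subset[rotated])
  finally show ?thesis .
qed




lemma bad_count:
  assumes k1: "1 \<le> k" and kn: "2*k \<le> n"
  shows "card {U. U \<subseteq> C0 n \<and> card U = 2*k \<and> \<not> goodU U} \<le>
    (2*n+1) * ((card (C0 n) - 1) choose (2*k-1)) +
    (\<Sum>s\<in>{3..2*k}. (n choose s) * (((s choose 2) choose s) * ((card (C0 n) - s) choose (2*k - s))))"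
proof -
  define m where "m = 2*k"
  define V where "V = C0 n"
  define N where "N = card V"
  define Sg where "Sg = V - PairsIn {..<n}"
  define X where "X T = {U. U \<subseteq> V \<and> card U = m \<and> T \<subseteq> U}" for T
  define Ws where "Ws s = {W. W \<subseteq> {..<n} \<and> card W = s}" for s
  define Ts where "Ts W s = {T. T \<subseteq> PairsIn W \<and> card T = s}" for W s
  define A1 where "A1 = (\<Union>y\<in>Sg. X {y})"
  define A2 where "A2 = (\<Union>s\<in>{3..m}. \<Union>W\<in>Ws s. \<Union>T\<in>Ts W s. X T)"
  have finV: "finite V" unfolding V_def by (rule possible_edges_finite)
  have bad: "{U. U \<subseteq> V \<and> card U = m \<and> \<not> goodU U} \<subseteq> A1 \<union> A2"
  proof
    fix U assume "U \<in> {U. U \<subseteq> V \<and> card U = m \<and> \<not> goodU U}"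
    then have U: "U \<subseteq> V" "card U = m" "\<not> goodU U" by auto
    have finU: "finite U" using U(1) finV by (rule finite_subset)
    show "U \<in> A1 \<union> A2"
    proof (cases "U \<subseteq> PairsIn {..<n}")
      case False
      then obtain y where "y \<in> U" "y \<notin> PairsIn {..<n}" by blast
      then have "y \<in> Sg" "U \<in> X {y}" unfolding Sg_def X_def using U by auto
      then show ?thesis unfolding A1_def by blast
    next
      case True
      have "card U \<le> n" using U(2) kn unfolding m_def by simp
      from core_struct[OF True finU this U(3)] obtain T W where
        TW: "T \<subseteq> U" "W \<subseteq> {..<n}" "card W = card T" "T \<subseteq> PairsIn W" "3 \<le> card T" by blast
      have "card T \<le> m" using card_mono[OF finU TW(1)] U(2) by simp
      then have "card T \<in> {3..m}" using TW(5) by simp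
      moreover have "W \<in> Ws (card T)" unfolding Ws_def using TW by simp
      moreover have "T \<in> Ts W (card T)" unfolding Ts_def using TW by simp
      moreover have "U \<in> X T" unfolding X_def using U TW by simp
      ultimately show ?thesis unfolding A2_def by blast
    qed
  qed
  have finA: "finite (A1 \<union> A2)"
  proof -
    have "A1 \<union> A2 \<subseteq> Pow V" unfolding A1_def A2_def X_def by (intro Un_least UN_least) auto
    then show ?thesis by (rule finite_subset) (simp add: finV)
  qed
  have c1: "card A1 \<le> (2*n+1) * ((N - 1) choose (m - 1))"
  proof -
    have finSg: "finite Sg" unfolding Sg_def using finV by simp
    have "card A1 \<le> (\<Sum>y\<in>Sg. card (X {y}))" unfolding A1_def by (rule card_UN_le[OF finSg])
    also have "\<dots> = (\<Sum>y\<in>Sg. (N - 1) choose (m - 1))"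
    proof (rule sum.cong[OF refl])
      fix y assume "y \<in> Sg"
      then have "{y} \<subseteq> V" unfolding Sg_def by simp
      moreover have "card {y} \<le> m" using k1 unfolding m_def by simp
      ultimately show "card (X {y}) = (N - 1) choose (m - 1)"
        unfolding X_def N_def using supersets_card[OF finV, of "{y}" m] by simp
    qed
    also have "\<dots> = card Sg * ((N - 1) choose (m - 1))" by simp
    also have "\<dots> \<le> (2*n+1) * ((N - 1) choose (m - 1))"
      using card_Sing[of n] unfolding Sg_def V_def by (intro mult_right_mono) auto
    finally show ?thesis .
  qed
  have c2: "card A2 \<le> (\<Sum>s\<in>{3..m}. (n choose s) * (((s choose 2) choose s) * ((N - s) choose (m - s))))"
  proof -
    have finWs: "finite (Ws s)" for s
    proof -
      have "Ws s \<subseteq> Pow {..<n}" unfolding Ws_def by blast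
      then show ?thesis by (rule finite_subset) simp
    qed
    have finTs: "finite (Ts W s)" if "W \<in> Ws s" for W s
    proof -
      have "W \<subseteq> {..<n}" using that unfolding Ws_def by simp
      then have "finite W" by (rule finite_subset) simp
      then have "finite (PairsIn W)" by (rule finite_PairsIn)
      moreover have "Ts W s \<subseteq> Pow (PairsIn W)" unfolding Ts_def by blast
      ultimately show ?thesis by (metis finite_Pow_iff finite_subset)
    qed
    have inner: "(\<Sum>T\<in>Ts W s. card (X T)) = ((s choose 2) choose s) * ((N - s) choose (m - s))"
      if W: "W \<in> Ws s" and s: "s \<in> {3..m}" for W s
    proof -
      have WW: "W \<subseteq> {..<n}" "card W = s" using W unfolding Ws_def by auto
      have finW: "finite W" using WW(1) by (rule finite_subset) simp
      have "(\<Sum>T\<in>Ts W s. card (X T)) = (\<Sum>T\<in>Ts W s. (N - s) choose (m - s))"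
      proof (rule sum.cong[OF refl])
        fix T assume "T \<in> Ts W s"
        then have T: "T \<subseteq> PairsIn W" "card T = s" unfolding Ts_def by auto
        have "T \<subseteq> V" using T(1) PairsIn_mono[OF WW(1)] PairsIn_C0[of n] unfolding V_def by blast
        moreover have "card T \<le> m" using T(2) s by simp
        ultimately show "card (X T) = (N - s) choose (m - s)"
          unfolding X_def N_def using supersets_card[OF finV, of T m] T(2) by simp
      qed
      also have "\<dots> = card (Ts W s) * ((N - s) choose (m - s))" by simp
      also have "card (Ts W s) = (s choose 2) choose s"
        unfolding Ts_def using n_subsets[OF finite_PairsIn[OF finW], of s] card_PairsIn[OF finW] WW(2)
        by simp
      finally show ?thesis .
    qed
    have "card A2 \<le> (\<Sum>s\<in>{3..m}. card (\<Union>W\<in>Ws s. \<Union>T\<in>Ts W s. X T))"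
      unfolding A2_def by (rule card_UN_le) simp
    also have "\<dots> \<le> (\<Sum>s\<in>{3..m}. \<Sum>W\<in>Ws s. card (\<Union>T\<in>Ts W s. X T))"
    proof (rule sum_mono)
      fix s assume "s \<in> {3..m}"
      show "card (\<Union>W\<in>Ws s. \<Union>T\<in>Ts W s. X T) \<le> (\<Sum>W\<in>Ws s. card (\<Union>T\<in>Ts W s. X T))"
        by (rule card_UN_le[OF finWs])
    qed
    also have "\<dots> \<le> (\<Sum>s\<in>{3..m}. \<Sum>W\<in>Ws s. \<Sum>T\<in>Ts W s. card (X T))"
    proof (rule sum_mono)
      fix s assume "s \<in> {3..m}"
      show "(\<Sum>W\<in>Ws s. card (\<Union>T\<in>Ts W s. X T)) \<le> (\<Sum>W\<in>Ws s. \<Sum>T\<in>Ts W s. card (X T))"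
      proof (rule sum_mono)
        fix W assume "W \<in> Ws s"
        show "card (\<Union>T\<in>Ts W s. X T) \<le> (\<Sum>T\<in>Ts W s. card (X T))"
          by (rule card_UN_le[OF finTs[OF \<open>W \<in> Ws s\<close>]])
      qed
    qed
    also have "\<dots> = (\<Sum>s\<in>{3..m}. \<Sum>W\<in>Ws s. ((s choose 2) choose s) * ((N - s) choose (m - s)))"
      using inner by (intro sum.cong refl) simp
    also have "\<dots> = (\<Sum>s\<in>{3..m}. card (Ws s) * (((s choose 2) choose s) * ((N - s) choose (m - s))))"
      by simp
    also have "\<dots> = (\<Sum>s\<in>{3..m}. (n choose s) * (((s choose 2) choose s) * ((N - s) choose (m - s))))"
    proof (rule sum.cong[OF refl])
      fix s show "card (Ws s) * (((s choose 2) choose s) * ((N - s) choose (m - s))) =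
          (n choose s) * (((s choose 2) choose s) * ((N - s) choose (m - s)))"
        unfolding Ws_def using n_subsets[of "{..<n}" s] by simp
    qed
    finally show ?thesis .
  qed
  have "card {U. U \<subseteq> V \<and> card U = m \<and> \<not> goodU U} \<le> card (A1 \<union> A2)"
    by (rule card_mono[OF finA bad])
  also have "\<dots> \<le> card A1 + card A2" by (rule card_Un_le)
  finally show ?thesis using c1 c2 unfolding m_def N_def V_def by linarith
qed




lemma binom_step: "Suc s * (n choose Suc s) = (n - s) * (n choose s)"
  using binomial_absorption[of s n] binomial_absorb_comp[of n s] by simp

lemma binom_ratio_nat:
  assumes "m \<le> N"
  shows "(m choose s) * N ^ s \<le> (N choose s) * m ^ s"
proof (induction s)
  case 0 then show ?case by simp
next
  case (Suc s)
  have key: "(m - s) * N \<le> (N - s) * m"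
  proof (cases "s \<le> m")
    case True
    then have "(m - s) * N = m * N - s * N" by (simp add: diff_mult_distrib)
    also have "\<dots> \<le> m * N - s * m" using assms by (intro diff_le_mono2) simp
    also have "\<dots> = (N - s) * m" by (simp add: diff_mult_distrib algebra_simps)
    finally show ?thesis .
  next
    case False then show ?thesis by simp
  qed
  have "Suc s * ((m choose Suc s) * N ^ Suc s) = (Suc s * (m choose Suc s)) * (N ^ s * N)"
    by (simp only: power_Suc2 mult_ac)
  also have "\<dots> = ((m - s) * (m choose s)) * (N ^ s * N)" by (simp only: binom_step)
  also have "\<dots> = ((m - s) * N) * ((m choose s) * N ^ s)" by (simp add: mult_ac)
  also have "\<dots> \<le> ((N - s) * m) * ((N choose s) * m ^ s)"
    using key Suc.IH by (rule mult_mono) simp_all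
  also have "\<dots> = ((N - s) * (N choose s)) * (m ^ s * m)" by (simp add: mult_ac)
  also have "\<dots> = (Suc s * (N choose Suc s)) * (m ^ s * m)" by (simp only: binom_step)
  also have "\<dots> = Suc s * ((N choose Suc s) * m ^ Suc s)" by (simp only: power_Suc2 mult_ac)
  finally show ?case by (simp only: mult_le_cancel1)
qed

lemma binom_sub_bound:
  assumes "s \<le> m" "m \<le> N" "0 < N"
  shows "real ((N - s) choose (m - s)) \<le> real (N choose m) * (real m / real N) ^ s"
proof -
  have A: "(N choose m) * (m choose s) = (N choose s) * ((N - s) choose (m - s))"
    using choose_mult[OF assms(1,2)] .
  have B: "(m choose s) * N ^ s \<le> (N choose s) * m ^ s" using binom_ratio_nat[OF assms(2)] .
  have pos: "(N choose s) > 0" using assms by simp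
  have "real (N choose s) * (real ((N - s) choose (m - s)) * real N ^ s)
      = real (N choose m) * (real (m choose s) * real N ^ s)"
    using arg_cong[OF A, of real] by (simp add: algebra_simps)
  also have "\<dots> \<le> real (N choose m) * (real (N choose s) * real m ^ s)"
    using B by (intro mult_left_mono) (simp_all flip: of_nat_mult of_nat_power)
  finally have "real ((N - s) choose (m - s)) * real N ^ s \<le> real (N choose m) * real m ^ s"
    using pos by (simp add: algebra_simps)
  then show ?thesis using assms(3) by (simp add: field_simps power_divide)
qed

lemma pow_le_exp_fact: "real s ^ s \<le> exp (real s) * fact s"
proof (induction s)
  case 0 then show ?case by simp
next
  case (Suc s)
  have e: "(real s + 1) ^ s \<le> exp 1 * real s ^ s"
  proof (cases "s = 0")
    case True then show ?thesis by simp
  next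
    case False
    then have sp: "real s > 0" by simp
    have "real s + 1 \<le> real s * exp (1 / real s)"
    proof -
      have "1 + 1 / real s \<le> exp (1 / real s)" by (rule exp_ge_add_one_self)
      then have "real s * (1 + 1 / real s) \<le> real s * exp (1 / real s)"
        using sp by (intro mult_left_mono) simp_all
      moreover have "real s * (1 + 1 / real s) = real s + 1" using sp by (simp add: field_simps)
      ultimately show ?thesis by simp
    qed
    then have "(real s + 1) ^ s \<le> (real s * exp (1 / real s)) ^ s"
      by (rule power_mono) simp
    also have "\<dots> = real s ^ s * exp (1 / real s) ^ s" by (simp add: power_mult_distrib)
    also have "exp (1 / real s) ^ s = exp (real s * (1 / real s))" by (rule exp_of_nat_mult[symmetric])
    also have "real s * (1 / real s) = 1" using sp by simp
    finally show ?thesis by (simp add: mult.commute)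
  qed
  have "real (Suc s) ^ Suc s = (real s + 1) * (real s + 1) ^ s" by (simp add: add.commute)
  also have "\<dots> \<le> (real s + 1) * (exp 1 * real s ^ s)" using e by (intro mult_left_mono) simp_all
  also have "\<dots> \<le> (real s + 1) * (exp 1 * (exp (real s) * fact s))"
    using Suc.IH by (intro mult_left_mono) simp_all
  also have "\<dots> = exp (real (Suc s)) * fact (Suc s)"
    by (simp add: exp_add[symmetric] algebra_simps)
  finally show ?case .
qed


lemma geo_bound:
  fixes y :: real
  assumes "0 \<le> y" "y \<le> 1/2"
  shows "(\<Sum>s=3..m. y ^ s) \<le> 2 * y ^ 3"
proof (cases "m < 3")
  case True then show ?thesis using assms by simp
next
  case False
  have y1: "y \<noteq> 1" using assms by auto
  have "(\<Sum>s=3..m. y ^ s) = (y ^ 3 - y ^ Suc m) / (1 - y)"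
    using False y1 by (simp add: sum_gp)
  also have "\<dots> \<le> y ^ 3 / (1 - y)"
    using assms by (intro divide_right_mono) simp_all
  also have "\<dots> \<le> 2 * y ^ 3"
  proof -
    have "(2 * y) * y ^ 3 \<le> 1 * y ^ 3" using assms by (intro mult_right_mono) simp_all
    then have "y ^ 3 \<le> 2 * y ^ 3 * (1 - y)" by (simp add: algebra_simps)
    then show ?thesis using assms by (simp add: pos_divide_le_eq)
  qed
  finally show ?thesis .
qed

lemma choose2_eq: "2 * (n choose 2) = n * (n - 1)"
  using binom_step[of 1 n] by (simp add: numeral_2_eq_2 mult.commute)

lemma coef_bound:
  "real (n choose s) * real ((s choose 2) choose s) \<le> (exp 2 * real n) ^ s"
proof -
  have c2: "s choose 2 \<le> s * s"
  proof -
    have "2 * (s choose 2) = s * (s - 1)" by (rule choose2_eq)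
    also have "\<dots> \<le> s * s" by simp
    finally show ?thesis by simp
  qed
  have a: "real (n choose s) * fact s \<le> real n ^ s"
    using binomial_fact_pow[of n s] by (metis of_nat_fact of_nat_le_iff of_nat_mult of_nat_power)
  have b: "real ((s choose 2) choose s) * fact s \<le> real s ^ s * real s ^ s"
  proof -
    have "((s choose 2) choose s) \<le> ((s * s) choose s)" using c2 by (rule binomial_right_mono)
    then have "((s choose 2) choose s) * fact s \<le> ((s * s) choose s) * fact s" by simp
    also have "\<dots> \<le> (s * s) ^ s" by (rule binomial_fact_pow)
    finally have "real (((s choose 2) choose s) * fact s) \<le> real ((s * s) ^ s)" by (rule of_nat_mono)
    then show ?thesis by (simp add: power_mult_distrib)
  qed
  have e: "real s ^ s \<le> exp (real s) * fact s" by (rule pow_le_exp_fact)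
  have fpos: "(fact s :: real) > 0" by simp
  have "(real (n choose s) * real ((s choose 2) choose s)) * (fact s * fact s)
      = (real (n choose s) * fact s) * (real ((s choose 2) choose s) * fact s)" by (simp add: mult_ac)
  also have "\<dots> \<le> real n ^ s * (real s ^ s * real s ^ s)"
    by (rule mult_mono[OF a b]) simp_all
  also have "\<dots> \<le> real n ^ s * ((exp (real s) * fact s) * (exp (real s) * fact s))"
    using e by (intro mult_left_mono mult_mono) simp_all
  also have "\<dots> = ((exp 2 * real n) ^ s) * (fact s * fact s)"
  proof -
    have "exp (real s) * exp (real s) = exp 2 ^ s"
      by (simp add: exp_add[symmetric] exp_of_nat_mult[symmetric] algebra_simps)
    then show ?thesis by (simp add: power_mult_distrib algebra_simps)
  qed
  finally show ?thesis using fpos by (simp add: mult_le_cancel_right_pos)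
qed




lemma good_fraction:
  assumes k1: "1 \<le> k" and n4: "4 \<le> n" and small: "1000 * k \<le> n"
  shows "1 - 21 * real k / real n \<le>
    real (card {U. U \<subseteq> C0 n \<and> card U = 2*k \<and> goodU U}) / real (card {U. U \<subseteq> C0 n \<and> card U = 2*k})"
proof -
  define N where "N = card (C0 n)"
  define m where "m = 2 * k"
  define C where "C = N choose m"
  define Us where "Us = {U. U \<subseteq> C0 n \<and> card U = 2*k}"
  define Gd where "Gd = {U. U \<subseteq> C0 n \<and> card U = 2*k \<and> goodU U}"
  define Bd where "Bd = {U. U \<subseteq> C0 n \<and> card U = 2*k \<and> \<not> goodU U}"
  define B1 where "B1 = (2*n+1) * ((N - 1) choose (m - 1))"
  define B2 where "B2 = (\<Sum>s\<in>{3..m}. (n choose s) * (((s choose 2) choose s) * ((N - s) choose (m - s))))"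
  have N2: "n * (n - 1) \<le> 2 * N" using card_C0_ge[of n] choose2_eq[of n] unfolding N_def by simp
  have rN2: "real n * (real n - 1) \<le> 2 * real N"
  proof -
    have "real (n * (n - 1)) \<le> real (2 * N)" using N2 by (rule of_nat_mono)
    then show ?thesis using n4 by (simp add: of_nat_diff)
  qed
  have mn: "m \<le> n" using small unfolding m_def by simp
  have nN: "n \<le> N"
  proof -
    have "n * 2 \<le> n * (n - 1)" using n4 by (intro mult_left_mono) simp_all
    then have "n * 2 \<le> 2 * N" using N2 by (rule le_trans)
    then show ?thesis by simp
  qed
  have mN: "m \<le> N" using mn nN by simp
  have Npos: "0 < N" using nN n4 by simp
  have finC: "finite (C0 n)" by (rule possible_edges_finite)
  have cUs: "card Us = C" unfolding Us_def C_def N_def m_def using n_subsets[OF finC] by simp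
  have Cpos: "C > 0" unfolding C_def using mN by simp
  have part: "card Us = card Gd + card Bd"
  proof -
    have "Us = Gd \<union> Bd" "Gd \<inter> Bd = {}" unfolding Us_def Gd_def Bd_def by auto
    moreover have "finite Us" unfolding Us_def by (rule finite_subset[of _ "Pow (C0 n)"]) (auto simp: finC)
    ultimately show ?thesis by (simp add: card_Un_disjoint)
  qed
  have bad: "card Bd \<le> B1 + B2"
    unfolding Bd_def B1_def B2_def N_def m_def using bad_count[OF k1] small by simp
  have b1: "real B1 \<le> real C * (12 * real k / real n)"
  proof -
    have h: "real ((N - 1) choose (m - 1)) \<le> real C * (real m / real N)"
      unfolding C_def using binom_sub_bound[of 1 m N] k1 mN Npos unfolding m_def by simp
    have "real B1 \<le> real (2*n+1) * (real C * (real m / real N))"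
      unfolding B1_def of_nat_mult by (rule mult_left_mono[OF h]) simp
    also have "\<dots> = real C * ((real (2*n+1) * real m) / real N)" by (simp add: algebra_simps)
    also have "\<dots> \<le> real C * (12 * real k / real n)"
    proof (rule mult_left_mono)
      have "(real (2*n+1) * real m) * real n = (2 * real k * real n) * (2 * real n + 1)"
        unfolding m_def by (simp add: algebra_simps)
      also have "\<dots> \<le> (2 * real k * real n) * (3 * (real n - 1))"
        using n4 by (intro mult_left_mono) simp_all
      also have "\<dots> = 6 * real k * (real n * (real n - 1))" by (simp add: algebra_simps)
      also have "\<dots> \<le> 6 * real k * (2 * real N)" using rN2 by (intro mult_left_mono) simp_all
      also have "\<dots> = 12 * real k * real N" by simp
      finally have "(real (2*n+1) * real m) * real n \<le> 12 * real k * real N" .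
      then show "(real (2*n+1) * real m) / real N \<le> 12 * real k / real n"
        using Npos n4 by (simp add: divide_simps)
    qed simp
    finally show ?thesis .
  qed
  define y where "y = 54 * real k / real n"
  have y0: "0 \<le> y" and yh: "y \<le> 1/2"
  proof -
    show "0 \<le> y" unfolding y_def by simp
    have "1000 * real k \<le> real n" using small by (metis of_nat_le_iff of_nat_mult of_nat_numeral)
    then show "y \<le> 1/2" unfolding y_def using n4 by (simp add: divide_simps)
  qed
  have ratio: "exp 2 * real n * (real m / real N) \<le> y"
  proof -
    have e2: "exp (2::real) \<le> 9"
    proof -
      have "exp (2::real) = exp 1 * exp 1" by (simp add: exp_add[symmetric])
      also have "\<dots> \<le> 3 * 3" using exp_le by (intro mult_mono) simp_all
      finally show ?thesis by simp
    qed
    have "real n * real m * real n = (2 * real k * real n) * real n" unfolding m_def by simp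
    also have "\<dots> \<le> (2 * real k * real n) * (3 / 2 * (real n - 1))"
      using n4 by (intro mult_left_mono) simp_all
    also have "\<dots> = 3 * real k * (real n * (real n - 1))" by (simp add: field_simps)
    also have "\<dots> \<le> 3 * real k * (2 * real N)" using rN2 by (intro mult_left_mono) simp_all
    finally have "real n * real m * real n \<le> 6 * real k * real N" by simp
    then have a: "real n * (real m / real N) \<le> 6 * real k / real n"
      using Npos n4 by (simp add: divide_simps)
    have "exp 2 * real n * (real m / real N) = exp 2 * (real n * (real m / real N))" by simp
    also have "\<dots> \<le> 9 * (6 * real k / real n)" using e2 a by (intro mult_mono) simp_all
    also have "\<dots> = y" unfolding y_def by simp
    finally show ?thesis .
  qed
  have b2: "real B2 \<le> real C * (2 * y ^ 3)"
  proof -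
    have "real B2 = (\<Sum>s\<in>{3..m}. real (n choose s) * real ((s choose 2) choose s) * real ((N - s) choose (m - s)))"
      unfolding B2_def by (simp add: of_nat_sum mult.assoc)
    also have "\<dots> \<le> (\<Sum>s\<in>{3..m}. real C * y ^ s)"
    proof (rule sum_mono)
      fix s assume s: "s \<in> {3..m}"
      have "real (n choose s) * real ((s choose 2) choose s) * real ((N - s) choose (m - s))
          \<le> (exp 2 * real n) ^ s * (real C * (real m / real N) ^ s)"
        using coef_bound binom_sub_bound[of s m N] s mN Npos unfolding C_def
        by (intro mult_mono) simp_all
      also have "\<dots> = real C * (exp 2 * real n * (real m / real N)) ^ s"
        by (simp only: power_mult_distrib mult_ac)
      also have "\<dots> \<le> real C * y ^ s"
        using ratio by (intro mult_left_mono power_mono) simp_all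
      finally show "real (n choose s) * real ((s choose 2) choose s) * real ((N - s) choose (m - s)) \<le> real C * y ^ s" .
    qed
    also have "\<dots> = real C * (\<Sum>s=3..m. y ^ s)" by (simp add: sum_distrib_left)
    also have "\<dots> \<le> real C * (2 * y ^ 3)" using geo_bound[OF y0 yh] by (intro mult_left_mono) simp_all
    finally show ?thesis .
  qed
  have fin: "2 * y ^ 3 \<le> 9 * real k / real n"
  proof -
    have x: "real k / real n \<le> 1 / 1000"
    proof -
      have "1000 * real k \<le> real n" using small by (metis of_nat_le_iff of_nat_mult of_nat_numeral)
      then show ?thesis using n4 by (simp add: divide_simps)
    qed
    have x0: "0 \<le> real k / real n" by simp
    have "2 * y ^ 3 = 314928 * (real k / real n) ^ 2 * (real k / real n)"
      unfolding y_def by (simp add: power_divide power3_eq_cube power2_eq_square)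
    also have "\<dots> \<le> 314928 * (1/1000) ^ 2 * (real k / real n)"
      using x x0 by (intro mult_right_mono mult_left_mono power_mono) simp_all
    also have "\<dots> \<le> 9 * (real k / real n)" by (rule mult_right_mono) (simp_all add: power2_eq_square)
    finally show ?thesis by simp
  qed
  have "real (card Bd) \<le> real C * (21 * real k / real n)"
  proof -
    have "real (card Bd) \<le> real B1 + real B2" using bad by (metis of_nat_add of_nat_le_iff)
    also have "\<dots> \<le> real C * (12 * real k / real n) + real C * (9 * real k / real n)"
      using b1 b2 fin by (smt (verit) mult_left_mono of_nat_0_le_iff)
    also have "\<dots> = real C * (21 * real k / real n)" by (simp add: algebra_simps)
    finally show ?thesis .
  qed
  then have "real (card Bd) \<le> (21 * real k / real n) * real C" by (simp only: mult.commute)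
  moreover have Cp: "real C > 0" using Cpos by simp
  ultimately have "real (card Bd) / real C \<le> 21 * real k / real n"
    by (subst pos_divide_le_eq[OF Cp])
  moreover have "real (card Gd) / real (card Us) = 1 - real (card Bd) / real C"
  proof -
    have e1: "real (card Us) = real C" using cUs by simp
    have e2: "real (card Gd) = real C - real (card Bd)" using part cUs by simp
    have "real (card Gd) / real (card Us) = (real C - real (card Bd)) / real C" by (simp only: e1 e2)
    also have "\<dots> = 1 - real (card Bd) / real C" using Cp by (simp add: diff_divide_distrib)
    finally show ?thesis .
  qed
  ultimately show ?thesis unfolding Gd_def Us_def by simp
qed



theorem mainTheorem10:
  fixes k :: "nat \<Rightarrow> nat" and p :: "nat \<Rightarrow> real"
  assumes "\<forall>n. 0 < k n"
    and "(\<lambda>n. real (k n) / real n) \<longlonglongrightarrow> 0"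
    and "\<forall>n. 0 < p n \<and> p n < 1"
  shows "\<exists>c>0. \<forall>\<^sub>F n in sequentially.
           cond_prob_def0_paired n (p n) (k n)
             \<ge> (1 - c * real (k n) ^ 4 / real n ^ 4) * (1 - 21 * real (k n) / real n)"
proof (intro exI[of _ 1] conjI)
  show "(0::real) < 1" by simp
  have ev1: "\<forall>\<^sub>F n in sequentially. real (k n) / real n < 1 / 1000"
    using assms(2) by (rule order_tendstoD(2)) simp
  have ev2: "\<forall>\<^sub>F n in sequentially. 4 \<le> n" by (rule eventually_ge_at_top)
  show "\<forall>\<^sub>F n in sequentially.
           cond_prob_def0_paired n (p n) (k n)
             \<ge> (1 - 1 * real (k n) ^ 4 / real n ^ 4) * (1 - 21 * real (k n) / real n)"
    using ev1 ev2
  proof eventually_elim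
    case (elim n)
    have n4: "4 \<le> n" using elim by simp
    have k1: "1 \<le> k n" using assms(1) by (simp add: Suc_le_eq)
    have "real (k n) * 1000 < real n" using elim n4 by (simp add: divide_simps)
    then have small: "1000 * k n \<le> n" by linarith
    have "n \<le> n choose 2"
    proof -
      have "n * 2 \<le> n * (n - 1)" using n4 by (intro mult_left_mono) simp_all
      then have "n * 2 \<le> 2 * (n choose 2)" by (simp only: choose2_eq)
      then show ?thesis by simp
    qed
    then have kN: "2 * k n \<le> card (C0 n)" using card_C0_ge[of n] small by simp
    have p: "0 < p n" "p n < 1" using assms(3) by auto
    have G: "1 - 21 * real (k n) / real n \<le> cond_prob_def0_paired n (p n) (k n)"
      using good_fraction[OF k1 n4 small] ratio_bound[OF p kN] by linarith
    have b0: "0 \<le> 1 - 21 * real (k n) / real n"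
    proof -
      have "21 * real (k n) / real n \<le> 1" using \<open>real (k n) * 1000 < real n\<close> n4 by (simp add: divide_simps)
      then show ?thesis by simp
    qed
    have a0: "0 \<le> 1 * real (k n) ^ 4 / real n ^ 4" by simp
    have "(1 - 1 * real (k n) ^ 4 / real n ^ 4) * (1 - 21 * real (k n) / real n) \<le> 1 - 21 * real (k n) / real n"
      using mult_right_mono[of "1 - 1 * real (k n) ^ 4 / real n ^ 4" 1 "1 - 21 * real (k n) / real n"] a0 b0 by simp
    then show ?case using G by linarith
  qed
qed

end
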